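(* Let $\Gamma=A\ast B$ with $A,B$ non-trivial and let $f=f_A\ast f_B$ be a split quasimorphism. The following are equivalent: (i) $f$ is trivial; (ii) $f$ is a homomorphism; (iii) $f$ is homogeneous; (iv) $f_A$ and $f_B$ are homomorphisms.
   Context: A quasimorphism is a map $f:\Gamma\to\mathbb{R}$ with $\sup_{g,h}|f(gh)-f(g)-f(h)|<\infty$; it is alternating if $f(g^{-1})=-f(g)$; it is trivial if it is the sum of a homomorphism $\Gamma\to\mathbb{R}$ and a bounded function; it is homogeneous if $f(g^n)=nf(g)$ for all $g\in\Gamma$, $n\in\mathbb{Z}$. Each $1\neq g\in A\ast B$ has a unique normal form $g=a_1b_1\cdots a_nb_n$ ($a_i\in A$, $b_i\in B$, all non-trivial except possibly $a_1$ or $b_n$). For alternating quasimorphisms $f_A,f_B$ on $A,B$ the split quasimorphism is $f(1)=0$, $f(a_1b_1\cdots a_nb_n)=f_A(a_1)+f_B(b_1)+\dots+f_A(a_n)+f_B(b_n)$. *)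

theory Defs
  imports "HOL-Algebra.Algebra"
begin

text \<open>Free products are rendered as internal free products: A and B are subgroups of a
group G such that every element of G has a unique normal form, i.e. is the value of exactly
one reduced alternating word.\<close>

definition reduced_word :: "('g, 'b) monoid_scheme \<Rightarrow> 'g set \<Rightarrow> 'g set \<Rightarrow> ('g + 'g) list \<Rightarrow> bool" where
  "reduced_word G A B w \<longleftrightarrow>
     (\<forall>x \<in> set w. case x of Inl a \<Rightarrow> a \<in> A \<and> a \<noteq> \<one>\<^bsub>G\<^esub>
                          | Inr b \<Rightarrow> b \<in> B \<and> b \<noteq> \<one>\<^bsub>G\<^esub>) \<and>
     (\<forall>i. Suc i < length w \<longrightarrow> isl (w ! i) \<noteq> isl (w ! Suc i))"

definition letter_val :: "'g + 'g \<Rightarrow> 'g" where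
  "letter_val x = (case x of Inl a \<Rightarrow> a | Inr b \<Rightarrow> b)"

definition word_eval :: "('g, 'b) monoid_scheme \<Rightarrow> ('g + 'g) list \<Rightarrow> 'g" where
  "word_eval G w = foldr (\<lambda>x acc. letter_val x \<otimes>\<^bsub>G\<^esub> acc) w \<one>\<^bsub>G\<^esub>"

definition is_free_product :: "('g, 'b) monoid_scheme \<Rightarrow> 'g set \<Rightarrow> 'g set \<Rightarrow> bool" where
  "is_free_product G A B \<longleftrightarrow> group G \<and> subgroup A G \<and> subgroup B G \<and>
     (\<forall>g \<in> carrier G. \<exists>!w. reduced_word G A B w \<and> word_eval G w = g)"

definition quasimorphism :: "('g, 'b) monoid_scheme \<Rightarrow> ('g \<Rightarrow> real) \<Rightarrow> bool" where
  "quasimorphism G f \<longleftrightarrow> (\<exists>D. \<forall>g \<in> carrier G. \<forall>h \<in> carrier G.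
      \<bar>f (g \<otimes>\<^bsub>G\<^esub> h) - f g - f h\<bar> \<le> D)"

definition alternating :: "('g, 'b) monoid_scheme \<Rightarrow> ('g \<Rightarrow> real) \<Rightarrow> bool" where
  "alternating G f \<longleftrightarrow> (\<forall>g \<in> carrier G. f (inv\<^bsub>G\<^esub> g) = - f g)"

definition real_hom :: "('g, 'b) monoid_scheme \<Rightarrow> ('g \<Rightarrow> real) \<Rightarrow> bool" where
  "real_hom G f \<longleftrightarrow> (\<forall>g \<in> carrier G. \<forall>h \<in> carrier G. f (g \<otimes>\<^bsub>G\<^esub> h) = f g + f h)"

definition trivial_qm :: "('g, 'b) monoid_scheme \<Rightarrow> ('g \<Rightarrow> real) \<Rightarrow> bool" where
  "trivial_qm G f \<longleftrightarrow> (\<exists>\<phi> \<beta>. real_hom G \<phi> \<and> (\<exists>C. \<forall>g \<in> carrier G. \<bar>\<beta> g\<bar> \<le> C) \<and>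
      (\<forall>g \<in> carrier G. f g = \<phi> g + \<beta> g))"

definition homogeneous :: "('g, 'b) monoid_scheme \<Rightarrow> ('g \<Rightarrow> real) \<Rightarrow> bool" where
  "homogeneous G f \<longleftrightarrow> (\<forall>g \<in> carrier G. \<forall>n::int. f (g [^]\<^bsub>G\<^esub> n) = of_int n * f g)"

definition split_qm :: "('g, 'b) monoid_scheme \<Rightarrow> 'g set \<Rightarrow> 'g set \<Rightarrow> ('g \<Rightarrow> real) \<Rightarrow> ('g \<Rightarrow> real) \<Rightarrow> 'g \<Rightarrow> real" where
  "split_qm G A B fA fB g =
     (let w = (THE w. reduced_word G A B w \<and> word_eval G w = g)
      in sum_list (map (\<lambda>x. case x of Inl a \<Rightarrow> fA a | Inr b \<Rightarrow> fB b) w))"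

end

theory Submission
  imports Defs
begin

definition wsum :: "('g \<Rightarrow> real) \<Rightarrow> ('g \<Rightarrow> real) \<Rightarrow> ('g + 'g) list \<Rightarrow> real" where
  "wsum fA fB w = sum_list (map (\<lambda>x. case x of Inl a \<Rightarrow> fA a | Inr b \<Rightarrow> fB b) w)"

lemma wsum_simps [simp]: "wsum fA fB [] = 0"
  "wsum fA fB (Inl a # w) = fA a + wsum fA fB w"
  "wsum fA fB (Inr b # w) = fB b + wsum fA fB w"
  by (simp_all add: wsum_def)

lemma word_eval_simps [simp]: "word_eval G [] = \<one>\<^bsub>G\<^esub>"
  "word_eval G (x # w) = letter_val x \<otimes>\<^bsub>G\<^esub> word_eval G w"
  by (simp_all add: word_eval_def)

lemma letter_val_simps [simp]: "letter_val (Inl a) = a" "letter_val (Inr b) = b"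
  by (simp_all add: letter_val_def)

lemma reduced_Nil [simp]: "reduced_word G A B []"
  by (simp add: reduced_word_def)

lemma reduced_Cons: "reduced_word G A B (x # w) \<longleftrightarrow>
   (case x of Inl a \<Rightarrow> a \<in> A \<and> a \<noteq> \<one>\<^bsub>G\<^esub> | Inr b \<Rightarrow> b \<in> B \<and> b \<noteq> \<one>\<^bsub>G\<^esub>) \<and>
   reduced_word G A B w \<and> (w \<noteq> [] \<longrightarrow> isl x \<noteq> isl (hd w))"
proof -
  have "(\<forall>i. Suc i < length (x # w) \<longrightarrow> isl ((x # w) ! i) \<noteq> isl ((x # w) ! Suc i)) \<longleftrightarrow>
        (w \<noteq> [] \<longrightarrow> isl x \<noteq> isl (hd w)) \<and> (\<forall>i. Suc i < length w \<longrightarrow> isl (w ! i) \<noteq> isl (w ! Suc i))"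
    (is "?L \<longleftrightarrow> ?R")
  proof
    assume L: ?L
    show ?R
    proof
      show "w \<noteq> [] \<longrightarrow> isl x \<noteq> isl (hd w)" using L[rule_format, of 0] by (cases w) auto
      show "\<forall>i. Suc i < length w \<longrightarrow> isl (w ! i) \<noteq> isl (w ! Suc i)"
        using L by (metis Suc_less_eq length_Cons nth_Cons_Suc)
    qed
  next
    assume R: ?R
    show ?L
    proof (intro allI impI)
      fix i assume "Suc i < length (x # w)"
      then show "isl ((x # w) ! i) \<noteq> isl ((x # w) ! Suc i)"
        using R by (cases i) (auto simp: hd_conv_nth)
    qed
  qed
  then show ?thesis unfolding reduced_word_def by auto
qed

lemma reduced_Inl_Inl [simp]: "reduced_word G A B (Inl a # Inl c # w) = False"
  by (simp add: reduced_Cons)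
lemma reduced_Inr_Inr [simp]: "reduced_word G A B (Inr a # Inr c # w) = False"
  by (simp add: reduced_Cons)

lemma eval_carrier:
  assumes "group G" "subgroup A G" "subgroup B G" "reduced_word G A B w"
  shows "word_eval G w \<in> carrier G"
  using assms(4)
proof (induction w)
  case Nil then show ?case using assms(1) by (simp add: group.is_monoid monoid.one_closed)
next
  case (Cons x w)
  then have r: "reduced_word G A B w" and xv: "letter_val x \<in> carrier G"
    using assms(2,3) subgroup.subset by (auto simp: reduced_Cons split: sum.splits)
  then show ?case using Cons.IH assms(1) by (simp add: group.is_monoid monoid.m_closed)
qed

lemma split_qm_eval:
  assumes fp: "is_free_product G A B" and r: "reduced_word G A B w"
  shows "split_qm G A B fA fB (word_eval G w) = wsum fA fB w"
proof -
  have c: "word_eval G w \<in> carrier G" using fp r eval_carrier unfolding is_free_product_def by blast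
  then have u: "\<exists>!w'. reduced_word G A B w' \<and> word_eval G w' = word_eval G w"
    using fp unfolding is_free_product_def by blast
  have "(THE w'. reduced_word G A B w' \<and> word_eval G w' = word_eval G w) = w"
    using the1_equality[OF u] r by blast
  then show ?thesis by (simp add: split_qm_def wsum_def)
qed

lemma fp_exists:
  assumes fp: "is_free_product G A B" and g: "g \<in> carrier G"
  obtains w where "reduced_word G A B w" "word_eval G w = g"
  using fp g unfolding is_free_product_def by blast

lemma (in group) left_mult_A:
  assumes fp: "is_free_product G A B"
    and hom: "\<forall>x\<in>A. \<forall>y\<in>A. fA (x \<otimes>\<^bsub>G\<^esub> y) = fA x + fA y"
    and x: "x \<in> A" and k: "k \<in> carrier G"
  shows "split_qm G A B fA fB (x \<otimes>\<^bsub>G\<^esub> k) = fA x + split_qm G A B fA fB k"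
proof -
  have grp: "group G" and sA: "subgroup A G" and sB: "subgroup B G"
    using fp unfolding is_free_product_def by auto
  have one: "\<one> \<in> A" using sA subgroup.one_closed by blast
  have f1: "fA \<one> = 0" using hom one by force
  have xc: "x \<in> carrier G" using x sA subgroup.subset by blast
  obtain w where r: "reduced_word G A B w" and ev: "word_eval G w = k" using fp_exists[OF fp k] by blast
  show ?thesis
  proof (cases "x = \<one>")
    case True then show ?thesis using k f1 by simp
  next
    case xn: False
    show ?thesis
    proof (cases w)
      case Nil
      have k1: "k = \<one>" using Nil ev by simp
      have "reduced_word G A B [Inl x]" using x xn by (simp add: reduced_Cons)
      from split_qm_eval[OF fp this, of fA fB] have "split_qm G A B fA fB x = fA x"
        using xc by simp
      moreover have "split_qm G A B fA fB \<one> = 0"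
        using split_qm_eval[OF fp reduced_Nil, of fA fB] by simp
      ultimately show ?thesis using k1 xc by simp
    next
      case (Cons y t)
      show ?thesis
      proof (cases y)
        case (Inr b)
        have "reduced_word G A B (Inl x # w)" using x xn r Cons Inr by (simp add: reduced_Cons)
        from split_qm_eval[OF fp this, of fA fB] show ?thesis using split_qm_eval[OF fp r, of fA fB] unfolding ev[symmetric] Cons Inr by simp
      next
        case (Inl a)
        have rr: "reduced_word G A B (Inl a # t)" using r unfolding Cons Inl .
        have a: "a \<in> A" "a \<noteq> \<one>" and rt: "reduced_word G A B t"
          and ht: "t \<noteq> [] \<longrightarrow> \<not> isl (hd t)"
          using rr unfolding reduced_Cons by auto
        have ac: "a \<in> carrier G" using a sA subgroup.subset by blast
        have tc: "word_eval G t \<in> carrier G" using eval_carrier[OF grp sA sB rt] .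
        have "word_eval G w = a \<otimes> word_eval G t" unfolding Cons Inl by simp
        then have "k = a \<otimes> word_eval G t" using ev by simp
        then have xk: "x \<otimes> k = (x \<otimes> a) \<otimes> word_eval G t"
          by (simp only: m_assoc[OF xc ac tc])
        have fk: "split_qm G A B fA fB k = fA a + wsum fA fB t"
          using split_qm_eval[OF fp r, of fA fB] unfolding ev[symmetric] Cons Inl by simp
        have xa: "x \<otimes> a \<in> A" by (rule subgroup.m_closed[OF sA x a(1)])
        have hxa: "fA (x \<otimes> a) = fA x + fA a" using hom x a(1) by auto
        show ?thesis
        proof (cases "x \<otimes> a = \<one>")
          case True
          have "x \<otimes> k = word_eval G t" unfolding xk True using tc by (rule l_one)
          then have "split_qm G A B fA fB (x \<otimes> k) = wsum fA fB t"
            using split_qm_eval[OF fp rt, of fA fB] by (simp only:)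
          moreover have "fA x + fA a = 0" using hxa True f1 by simp
          ultimately show ?thesis using fk by linarith
        next
          case False
          have "reduced_word G A B (Inl (x \<otimes> a) # t)" using xa False rt ht by (simp add: reduced_Cons)
          from split_qm_eval[OF fp this, of fA fB]
          have "split_qm G A B fA fB (x \<otimes> k) = fA (x \<otimes> a) + wsum fA fB t"
            unfolding xk by simp
          then show ?thesis using fk hxa by linarith
        qed
      qed
    qed
  qed
qed


lemma (in group) left_mult_B:
  assumes fp: "is_free_product G A B"
    and hom: "\<forall>x\<in>B. \<forall>y\<in>B. fB (x \<otimes>\<^bsub>G\<^esub> y) = fB x + fB y"
    and x: "x \<in> B" and k: "k \<in> carrier G"
  shows "split_qm G A B fA fB (x \<otimes>\<^bsub>G\<^esub> k) = fB x + split_qm G A B fA fB k"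
proof -
  have grp: "group G" and sB: "subgroup B G" and sA: "subgroup A G"
    using fp unfolding is_free_product_def by auto
  have one: "\<one> \<in> B" using sB subgroup.one_closed by blast
  have f1: "fB \<one> = 0" using hom one by force
  have xc: "x \<in> carrier G" using x sB subgroup.subset by blast
  obtain w where r: "reduced_word G A B w" and ev: "word_eval G w = k" using fp_exists[OF fp k] by blast
  show ?thesis
  proof (cases "x = \<one>")
    case True then show ?thesis using k f1 by simp
  next
    case xn: False
    show ?thesis
    proof (cases w)
      case Nil
      have k1: "k = \<one>" using Nil ev by simp
      have "reduced_word G A B [Inr x]" using x xn by (simp add: reduced_Cons)
      from split_qm_eval[OF fp this, of fA fB] have "split_qm G A B fA fB x = fB x"
        using xc by simp
      moreover have "split_qm G A B fA fB \<one> = 0"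
        using split_qm_eval[OF fp reduced_Nil, of fA fB] by simp
      ultimately show ?thesis using k1 xc by simp
    next
      case (Cons y t)
      show ?thesis
      proof (cases y)
        case (Inl b)
        have "reduced_word G A B (Inr x # w)" using x xn r Cons Inl by (simp add: reduced_Cons)
        from split_qm_eval[OF fp this, of fA fB] show ?thesis using split_qm_eval[OF fp r, of fA fB] unfolding ev[symmetric] Cons Inl by simp
      next
        case (Inr a)
        have rr: "reduced_word G A B (Inr a # t)" using r unfolding Cons Inr .
        have a: "a \<in> B" "a \<noteq> \<one>" and rt: "reduced_word G A B t"
          and ht: "t \<noteq> [] \<longrightarrow> isl (hd t)"
          using rr unfolding reduced_Cons by auto
        have ac: "a \<in> carrier G" using a sB subgroup.subset by blast
        have tc: "word_eval G t \<in> carrier G" using eval_carrier[OF grp sA sB rt] .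
        have "word_eval G w = a \<otimes> word_eval G t" unfolding Cons Inr by simp
        then have "k = a \<otimes> word_eval G t" using ev by simp
        then have xk: "x \<otimes> k = (x \<otimes> a) \<otimes> word_eval G t"
          by (simp only: m_assoc[OF xc ac tc])
        have fk: "split_qm G A B fA fB k = fB a + wsum fA fB t"
          using split_qm_eval[OF fp r, of fA fB] unfolding ev[symmetric] Cons Inr by simp
        have xa: "x \<otimes> a \<in> B" by (rule subgroup.m_closed[OF sB x a(1)])
        have hxa: "fB (x \<otimes> a) = fB x + fB a" using hom x a(1) by auto
        show ?thesis
        proof (cases "x \<otimes> a = \<one>")
          case True
          have "x \<otimes> k = word_eval G t" unfolding xk True using tc by (rule l_one)
          then have "split_qm G A B fA fB (x \<otimes> k) = wsum fA fB t"
            using split_qm_eval[OF fp rt, of fA fB] by (simp only:)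
          moreover have "fB x + fB a = 0" using hxa True f1 by simp
          ultimately show ?thesis using fk by linarith
        next
          case False
          have "reduced_word G A B (Inr (x \<otimes> a) # t)" using xa False rt ht by (simp add: reduced_Cons)
          from split_qm_eval[OF fp this, of fA fB]
          have "split_qm G A B fA fB (x \<otimes> k) = fB (x \<otimes> a) + wsum fA fB t"
            unfolding xk by simp
          then show ?thesis using fk hxa by linarith
        qed
      qed
    qed
  qed
qed

lemma (in group) hom_split:
  assumes fp: "is_free_product G A B"
    and hA: "\<forall>x\<in>A. \<forall>y\<in>A. fA (x \<otimes> y) = fA x + fA y"
    and hB: "\<forall>x\<in>B. \<forall>y\<in>B. fB (x \<otimes> y) = fB x + fB y"
  shows "real_hom G (split_qm G A B fA fB)"
proof -
  have grp: "group G" and sA: "subgroup A G" and sB: "subgroup B G"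
    using fp unfolding is_free_product_def by auto
  have main: "\<forall>k\<in>carrier G. split_qm G A B fA fB (word_eval G w \<otimes> k)
      = wsum fA fB w + split_qm G A B fA fB k" if "reduced_word G A B w" for w
    using that
  proof (induction w)
    case Nil then show ?case by simp
  next
    case (Cons x w)
    have rw: "reduced_word G A B w" using Cons.prems unfolding reduced_Cons by simp
    have wc: "word_eval G w \<in> carrier G" using eval_carrier[OF grp sA sB rw] .
    show ?case
    proof
      fix k assume k: "k \<in> carrier G"
      have wk: "word_eval G w \<otimes> k \<in> carrier G" using wc k by simp
      show "split_qm G A B fA fB (word_eval G (x # w) \<otimes> k) = wsum fA fB (x # w) + split_qm G A B fA fB k"
      proof (cases x)
        case (Inl a)
        have a: "a \<in> A" using Cons.prems Inl unfolding reduced_Cons by simp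
        have ac: "a \<in> carrier G" using a sA subgroup.subset by blast
        have "word_eval G (x # w) \<otimes> k = a \<otimes> (word_eval G w \<otimes> k)"
          using Inl m_assoc[OF ac wc k] by simp
        then show ?thesis using left_mult_A[OF fp hA a wk] Cons.IH[OF rw] k Inl by simp
      next
        case (Inr b)
        have b: "b \<in> B" using Cons.prems Inr unfolding reduced_Cons by simp
        have bc: "b \<in> carrier G" using b sB subgroup.subset by blast
        have "word_eval G (x # w) \<otimes> k = b \<otimes> (word_eval G w \<otimes> k)"
          using Inr m_assoc[OF bc wc k] by simp
        then show ?thesis using left_mult_B[OF fp hB b wk] Cons.IH[OF rw] k Inr by simp
      qed
    qed
  qed
  show ?thesis unfolding real_hom_def
  proof (intro ballI)
    fix g h assume g: "g \<in> carrier G" and h: "h \<in> carrier G"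
    obtain w where r: "reduced_word G A B w" and ev: "word_eval G w = g" using fp_exists[OF fp g] by blast
    have "split_qm G A B fA fB g = wsum fA fB w" using split_qm_eval[OF fp r, of fA fB] unfolding ev .
    then show "split_qm G A B fA fB (g \<otimes> h) = split_qm G A B fA fB g + split_qm G A B fA fB h"
      using main[OF r] h unfolding ev by simp
  qed
qed

lemma (in group) real_hom_basic:
  assumes "real_hom G f"
  shows "f \<one> = 0" and "\<And>g. g \<in> carrier G \<Longrightarrow> f (inv g) = - f g"
    and "\<And>g n. g \<in> carrier G \<Longrightarrow> f (g [^] (n::nat)) = real n * f g"
proof -
  have h: "\<And>g h. g \<in> carrier G \<Longrightarrow> h \<in> carrier G \<Longrightarrow> f (g \<otimes> h) = f g + f h"
    using assms unfolding real_hom_def by blast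
  show f1: "f \<one> = 0" using h[of \<one> \<one>] by simp
  show "f (inv g) = - f g" if g: "g \<in> carrier G" for g
    using h[of g "inv g"] g f1 by simp
  show "f (g [^] (n::nat)) = real n * f g" if g: "g \<in> carrier G" for g n
  proof (induction n)
    case 0 then show ?case using f1 by simp
  next
    case (Suc n) then show ?case using h[of "g [^] n" g] g by (simp add: algebra_simps)
  qed
qed

lemma (in group) hom_homogeneous:
  assumes "real_hom G f"
  shows "homogeneous G f"
  unfolding homogeneous_def
proof (intro ballI allI)
  fix g and n :: int assume g: "g \<in> carrier G"
  show "f (g [^] n) = of_int n * f g"
  proof (cases "n < 0")
    case True
    have "f (g [^] n) = f (inv (g [^] nat (- n)))" using True by (simp add: int_pow_def2 del: pow_nat)
    also have "\<dots> = - (real (nat (-n)) * f g)"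
      using real_hom_basic[OF assms] g by simp
    also have "\<dots> = of_int n * f g" using True by simp
    finally show ?thesis .
  next
    case False
    have "f (g [^] n) = f (g [^] nat n)" using False by (simp add: int_pow_def2 del: pow_nat)
    also have "\<dots> = real (nat n) * f g" using real_hom_basic[OF assms] g by simp
    also have "\<dots> = of_int n * f g" using False by simp
    finally show ?thesis .
  qed
qed

lemma (in group) pow2_int: "g \<in> carrier G \<Longrightarrow> g [^] (2::int) = g \<otimes> g"
  by (simp add: int_pow_def2 numeral_2_eq_2 del: pow_nat)

lemma (in group) homog_A:
  assumes fp: "is_free_product G A B"
    and alt: "alternating (G\<lparr>carrier := A\<rparr>) fA"
    and Bn: "B \<noteq> {\<one>}"
    and hg: "homogeneous G (split_qm G A B fA fB)"
  shows "real_hom (G\<lparr>carrier := A\<rparr>) fA"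
proof -
  have grp: "group G" and sA: "subgroup A G" and sB: "subgroup B G"
    using fp unfolding is_free_product_def by auto
  have oneB: "\<one> \<in> B" using sB subgroup.one_closed by blast
  obtain b where b: "b \<in> B" "b \<noteq> \<one>" using Bn oneB by blast
  have bc: "b \<in> carrier G" using b sB subgroup.subset by blast
  have alt': "fA (inv a) = - fA a" if "a \<in> A" for a
  proof -
    have "fA (inv\<^bsub>G\<lparr>carrier := A\<rparr>\<^esub> a) = - fA a" using alt that unfolding alternating_def by simp
    then show ?thesis using m_inv_consistent[OF sA that] by simp
  qed
  have oneA: "\<one> \<in> A" using sA subgroup.one_closed by blast
  have f1: "fA \<one> = 0" using alt'[OF oneA] by simp
  have "fA (x \<otimes> y) = fA x + fA y" if x: "x \<in> A" and y: "y \<in> A" for x y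
  proof -
    have xc: "x \<in> carrier G" using x sA subgroup.subset by blast
    have yc: "y \<in> carrier G" using y sA subgroup.subset by blast
    show ?thesis
    proof (cases "x = \<one> \<or> y = \<one>")
      case True then show ?thesis using f1 xc yc by auto
    next
      case nxy: False
      show ?thesis
      proof (cases "x \<otimes> y = \<one>")
        case True
        have "inv y = x" using inv_equality[OF True yc xc] .
        then have "fA x = - fA y" using alt'[OF y] by simp
        then show ?thesis using True f1 by simp
      next
        case False
        have xy: "x \<otimes> y \<in> A" by (rule subgroup.m_closed[OF sA x y])
        define w1 where "w1 = [Inl y, Inr b, Inl x]"
        define w2 where "w2 = [Inl y, Inr b, Inl (x \<otimes> y), Inr b, Inl x]"
        have r1: "reduced_word G A B w1" unfolding w1_def using x y b nxy by (simp add: reduced_Cons)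
        have r2: "reduced_word G A B w2" unfolding w2_def using x y b nxy xy False by (simp add: reduced_Cons)
        have gc: "word_eval G w1 \<in> carrier G" using eval_carrier[OF grp sA sB r1] .
        have e2: "word_eval G w2 = word_eval G w1 \<otimes> word_eval G w1"
          unfolding w1_def w2_def using xc yc bc by (simp add: m_assoc)
        have "split_qm G A B fA fB (word_eval G w1 [^] (2::int)) = of_int 2 * split_qm G A B fA fB (word_eval G w1)"
          using hg gc unfolding homogeneous_def by blast
        then have "split_qm G A B fA fB (word_eval G w2) = 2 * split_qm G A B fA fB (word_eval G w1)"
          using pow2_int[OF gc] e2 by simp
        then have "wsum fA fB w2 = 2 * wsum fA fB w1"
          using split_qm_eval[OF fp r1, of fA fB] split_qm_eval[OF fp r2, of fA fB] by simp
        then show ?thesis unfolding w1_def w2_def by simp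
      qed
    qed
  qed
  then show ?thesis unfolding real_hom_def by simp
qed

lemma (in group) homog_B:
  assumes fp: "is_free_product G A B"
    and alt: "alternating (G\<lparr>carrier := B\<rparr>) fB"
    and An: "A \<noteq> {\<one>}"
    and hg: "homogeneous G (split_qm G A B fA fB)"
  shows "real_hom (G\<lparr>carrier := B\<rparr>) fB"
proof -
  have grp: "group G" and sA: "subgroup A G" and sB: "subgroup B G"
    using fp unfolding is_free_product_def by auto
  have oneA: "\<one> \<in> A" using sA subgroup.one_closed by blast
  obtain b where b: "b \<in> A" "b \<noteq> \<one>" using An oneA by blast
  have bc: "b \<in> carrier G" using b sA subgroup.subset by blast
  have alt': "fB (inv a) = - fB a" if "a \<in> B" for a
  proof -
    have "fB (inv\<^bsub>G\<lparr>carrier := B\<rparr>\<^esub> a) = - fB a" using alt that unfolding alternating_def by simp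
    then show ?thesis using m_inv_consistent[OF sB that] by simp
  qed
  have oneB: "\<one> \<in> B" using sB subgroup.one_closed by blast
  have f1: "fB \<one> = 0" using alt'[OF oneB] by simp
  have "fB (x \<otimes> y) = fB x + fB y" if x: "x \<in> B" and y: "y \<in> B" for x y
  proof -
    have xc: "x \<in> carrier G" using x sB subgroup.subset by blast
    have yc: "y \<in> carrier G" using y sB subgroup.subset by blast
    show ?thesis
    proof (cases "x = \<one> \<or> y = \<one>")
      case True then show ?thesis using f1 xc yc by auto
    next
      case nxy: False
      show ?thesis
      proof (cases "x \<otimes> y = \<one>")
        case True
        have "inv y = x" using inv_equality[OF True yc xc] .
        then have "fB x = - fB y" using alt'[OF y] by simp
        then show ?thesis using True f1 by simp
      next
        case False
        have xy: "x \<otimes> y \<in> B" by (rule subgroup.m_closed[OF sB x y])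
        define w1 where "w1 = [Inr y, Inl b, Inr x]"
        define w2 where "w2 = [Inr y, Inl b, Inr (x \<otimes> y), Inl b, Inr x]"
        have r1: "reduced_word G A B w1" unfolding w1_def using x y b nxy by (simp add: reduced_Cons)
        have r2: "reduced_word G A B w2" unfolding w2_def using x y b nxy xy False by (simp add: reduced_Cons)
        have gc: "word_eval G w1 \<in> carrier G" using eval_carrier[OF grp sA sB r1] .
        have e2: "word_eval G w2 = word_eval G w1 \<otimes> word_eval G w1"
          unfolding w1_def w2_def using xc yc bc by (simp add: m_assoc)
        have "split_qm G A B fA fB (word_eval G w1 [^] (2::int)) = of_int 2 * split_qm G A B fA fB (word_eval G w1)"
          using hg gc unfolding homogeneous_def by blast
        then have "split_qm G A B fA fB (word_eval G w2) = 2 * split_qm G A B fA fB (word_eval G w1)"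
          using pow2_int[OF gc] e2 by simp
        then have "wsum fA fB w2 = 2 * wsum fA fB w1"
          using split_qm_eval[OF fp r1, of fA fB] split_qm_eval[OF fp r2, of fA fB] by simp
        then show ?thesis unfolding w1_def w2_def by simp
      qed
    qed
  qed
  then show ?thesis unfolding real_hom_def by simp
qed

lemma arch_zero:
  fixes d C :: real
  assumes "\<And>n::nat. \<bar>real n * d\<bar> \<le> C"
  shows "d = 0"
proof (rule ccontr)
  assume d: "d \<noteq> 0"
  obtain n :: nat where n: "C / \<bar>d\<bar> < real n" using reals_Archimedean2 by blast
  have "C < real n * \<bar>d\<bar>" using n d by (simp add: field_simps)
  then show False using assms[of n] by (simp add: abs_mult)
qed

lemma (in group) alt_restr:
  assumes "subgroup H G" "alternating (G\<lparr>carrier := H\<rparr>) f" "a \<in> H"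
  shows "f (inv a) = - f a"
proof -
  have "f (inv\<^bsub>G\<lparr>carrier := H\<rparr>\<^esub> a) = - f a" using assms(2,3) unfolding alternating_def by simp
  then show ?thesis using m_inv_consistent[OF assms(1,3)] by simp
qed

lemma (in group) trivial_key:
  assumes fp: "is_free_product G A B"
    and phi: "real_hom G \<phi>" and bnd: "\<forall>g \<in> carrier G. \<bar>\<beta> g\<bar> \<le> C"
    and eq: "\<forall>g \<in> carrier G. split_qm G A B fA fB g = \<phi> g + \<beta> g"
    and a: "a \<in> A" "a \<noteq> \<one>" and b: "b \<in> B" "b \<noteq> \<one>"
  shows "fA a + fB b = \<phi> a + \<phi> b"
proof -
  have grp: "group G" and sA: "subgroup A G" and sB: "subgroup B G"
    using fp unfolding is_free_product_def by auto
  have ac: "a \<in> carrier G" using a sA subgroup.subset by blast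
  have bc: "b \<in> carrier G" using b sB subgroup.subset by blast
  have abc0: "a \<otimes> b \<in> carrier G" using ac bc by simp
  define wn where "wn n = concat (replicate n [Inl a, Inr b])" for n
  have r: "reduced_word G A B (wn n)" for n
  proof (induction n)
    case 0 then show ?case by (simp add: wn_def)
  next
    case (Suc n) then show ?case using a b by (cases n) (simp_all add: wn_def reduced_Cons)
  qed
  have e: "word_eval G (wn n) = (a \<otimes> b) [^] n" for n
  proof (induction n)
    case 0 then show ?case by (simp add: wn_def)
  next
    case (Suc n)
    have "word_eval G (wn (Suc n)) = a \<otimes> (b \<otimes> word_eval G (wn n))" by (simp add: wn_def)
    also have "\<dots> = (a \<otimes> b) \<otimes> (a \<otimes> b) [^] n" using Suc ac bc by (simp add: m_assoc)
    also have "\<dots> = (a \<otimes> b) [^] Suc n" using nat_pow_Suc2[OF abc0] by simp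
    finally show ?case .
  qed
  have s: "wsum fA fB (wn n) = real n * (fA a + fB b)" for n
    by (induction n) (simp_all add: wn_def algebra_simps)
  have abc: "a \<otimes> b \<in> carrier G" using ac bc by simp
  have ph: "\<phi> ((a \<otimes> b) [^] n) = real n * (\<phi> a + \<phi> b)" for n
    using real_hom_basic(3)[OF phi abc, of n] phi ac bc unfolding real_hom_def by simp
  have "\<bar>real n * (fA a + fB b - \<phi> a - \<phi> b)\<bar> \<le> C" for n
  proof -
    have pc: "(a \<otimes> b) [^] n \<in> carrier G" using abc by simp
    have "split_qm G A B fA fB ((a \<otimes> b) [^] n) = real n * (fA a + fB b)"
      using split_qm_eval[OF fp r[of n], of fA fB] e s by simp
    then have "\<beta> ((a \<otimes> b) [^] n) = real n * (fA a + fB b - \<phi> a - \<phi> b)"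
      using eq pc ph by (simp add: algebra_simps)
    then show ?thesis using bnd pc by metis
  qed
  from arch_zero[OF this] show ?thesis by simp
qed

lemma (in group) trivial_homs:
  assumes fp: "is_free_product G A B"
    and altA: "alternating (G\<lparr>carrier := A\<rparr>) fA" and altB: "alternating (G\<lparr>carrier := B\<rparr>) fB"
    and An: "A \<noteq> {\<one>}" and Bn: "B \<noteq> {\<one>}"
    and tr: "trivial_qm G (split_qm G A B fA fB)"
  shows "real_hom (G\<lparr>carrier := A\<rparr>) fA \<and> real_hom (G\<lparr>carrier := B\<rparr>) fB"
proof -
  have grp: "group G" and sA: "subgroup A G" and sB: "subgroup B G"
    using fp unfolding is_free_product_def by auto
  obtain \<phi> \<beta> C where phi: "real_hom G \<phi>" and bnd: "\<forall>g \<in> carrier G. \<bar>\<beta> g\<bar> \<le> C"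
    and eq: "\<forall>g \<in> carrier G. split_qm G A B fA fB g = \<phi> g + \<beta> g"
    using tr unfolding trivial_qm_def by blast
  note key = trivial_key[OF fp phi bnd eq]
  have oneA: "\<one> \<in> A" using sA subgroup.one_closed by blast
  have oneB: "\<one> \<in> B" using sB subgroup.one_closed by blast
  obtain a0 where a0: "a0 \<in> A" "a0 \<noteq> \<one>" using An oneA by blast
  obtain b0 where b0: "b0 \<in> B" "b0 \<noteq> \<one>" using Bn oneB by blast
  have a0c: "a0 \<in> carrier G" using a0 sA subgroup.subset by blast
  have ia: "inv a0 \<in> A" using subgroup.m_inv_closed[OF sA a0(1)] .
  have ia1: "inv a0 \<noteq> \<one>" using a0 a0c by (metis inv_inv inv_one)
  have k1: "fA a0 + fB b0 = \<phi> a0 + \<phi> b0" using key a0 b0 by blast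
  have k2: "fA (inv a0) + fB b0 = \<phi> (inv a0) + \<phi> b0" using key ia ia1 b0 by blast
  have "fA (inv a0) = - fA a0" using alt_restr[OF sA altA a0(1)] .
  moreover have "\<phi> (inv a0) = - \<phi> a0" using real_hom_basic(2)[OF phi a0c] .
  ultimately have fb0: "fB b0 = \<phi> b0" and fa0: "fA a0 = \<phi> a0" using k1 k2 by linarith+
  have phi1: "\<phi> \<one> = 0" using real_hom_basic(1)[OF phi] .
  have fA1: "fA \<one> = 0" using alt_restr[OF sA altA oneA] by simp
  have fB1: "fB \<one> = 0" using alt_restr[OF sB altB oneB] by simp
  have eA: "fA a = \<phi> a" if "a \<in> A" for a
  proof (cases "a = \<one>")
    case True then show ?thesis using fA1 phi1 by simp
  next
    case False then show ?thesis using key[OF that False b0] fb0 by simp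
  qed
  have eB: "fB b = \<phi> b" if "b \<in> B" for b
  proof (cases "b = \<one>")
    case True then show ?thesis using fB1 phi1 by simp
  next
    case False then show ?thesis using key[OF a0 that False] fa0 by simp
  qed
  have "real_hom (G\<lparr>carrier := A\<rparr>) fA"
    unfolding real_hom_def
  proof (simp, intro ballI)
    fix x y assume x: "x \<in> A" and y: "y \<in> A"
    have xc: "x \<in> carrier G" using x sA subgroup.subset by blast
    have yc: "y \<in> carrier G" using y sA subgroup.subset by blast
    have "fA (x \<otimes> y) = \<phi> (x \<otimes> y)" using eA subgroup.m_closed[OF sA x y] by simp
    also have "\<dots> = \<phi> x + \<phi> y" using phi xc yc unfolding real_hom_def by simp
    finally show "fA (x \<otimes> y) = fA x + fA y" using eA x y by simp
  qed
  moreover have "real_hom (G\<lparr>carrier := B\<rparr>) fB"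
    unfolding real_hom_def
  proof (simp, intro ballI)
    fix x y assume x: "x \<in> B" and y: "y \<in> B"
    have xc: "x \<in> carrier G" using x sB subgroup.subset by blast
    have yc: "y \<in> carrier G" using y sB subgroup.subset by blast
    have "fB (x \<otimes> y) = \<phi> (x \<otimes> y)" using eB subgroup.m_closed[OF sB x y] by simp
    also have "\<dots> = \<phi> x + \<phi> y" using phi xc yc unfolding real_hom_def by simp
    finally show "fB (x \<otimes> y) = fB x + fB y" using eB x y by simp
  qed
  ultimately show ?thesis by blast
qed

theorem corollary3p4:
  fixes G :: "('g, 'b) monoid_scheme" and A B :: "'g set" and fA fB :: "'g \<Rightarrow> real"
  assumes "is_free_product G A B"
    and "A \<noteq> {\<one>\<^bsub>G\<^esub>}" and "B \<noteq> {\<one>\<^bsub>G\<^esub>}"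
    and "quasimorphism (G\<lparr>carrier := A\<rparr>) fA" and "alternating (G\<lparr>carrier := A\<rparr>) fA"
    and "quasimorphism (G\<lparr>carrier := B\<rparr>) fB" and "alternating (G\<lparr>carrier := B\<rparr>) fB"
  shows "(trivial_qm G (split_qm G A B fA fB) \<longleftrightarrow> real_hom G (split_qm G A B fA fB))
       \<and> (real_hom G (split_qm G A B fA fB) \<longleftrightarrow> homogeneous G (split_qm G A B fA fB))
       \<and> (homogeneous G (split_qm G A B fA fB) \<longleftrightarrow>
            (real_hom (G\<lparr>carrier := A\<rparr>) fA \<and> real_hom (G\<lparr>carrier := B\<rparr>) fB))"
proof -
  have grp: "group G" using assms(1) unfolding is_free_product_def by blast
  let ?f = "split_qm G A B fA fB"
  have iv_ii: "real_hom G ?f" if "real_hom (G\<lparr>carrier := A\<rparr>) fA \<and> real_hom (G\<lparr>carrier := B\<rparr>) fB"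
  proof -
    have hA: "\<forall>x\<in>A. \<forall>y\<in>A. fA (x \<otimes>\<^bsub>G\<^esub> y) = fA x + fA y"
      using that unfolding real_hom_def by simp
    have hB: "\<forall>x\<in>B. \<forall>y\<in>B. fB (x \<otimes>\<^bsub>G\<^esub> y) = fB x + fB y"
      using that unfolding real_hom_def by simp
    show ?thesis using group.hom_split[OF grp assms(1) hA hB] .
  qed
  have ii_i: "trivial_qm G ?f" if "real_hom G ?f"
    unfolding trivial_qm_def
    by (rule exI[of _ ?f], rule exI[of _ "\<lambda>_. 0"]) (use that in auto)
  have i_iv: "real_hom (G\<lparr>carrier := A\<rparr>) fA \<and> real_hom (G\<lparr>carrier := B\<rparr>) fB" if "trivial_qm G ?f"
    using group.trivial_homs[OF grp assms(1) assms(5) assms(7) assms(2) assms(3) that] .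
  have ii_iii: "homogeneous G ?f" if "real_hom G ?f"
    using group.hom_homogeneous[OF grp that] .
  have iii_iv: "real_hom (G\<lparr>carrier := A\<rparr>) fA \<and> real_hom (G\<lparr>carrier := B\<rparr>) fB" if "homogeneous G ?f"
    using group.homog_A[OF grp assms(1) assms(5) assms(3) that]
      group.homog_B[OF grp assms(1) assms(7) assms(2) that] by blast
  show ?thesis using iv_ii ii_i i_iv ii_iii iii_iv by blast
qed

end
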